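(* Let $X,Y$ be finite sets, $\mu\in\mathcal P(X)$, $\nu\in\mathcal P(Y)$, $c\in\mathbb R_+^{X\times Y}$, $\varepsilon>0$. Let $\{X_i\}_{i=1}^R$, $\{Y_i\}_{i=1}^R$ be partitions of $X$ and $Y$ with $\mu(X_i)=\nu(Y_i)$ for all $i$, and $y_i\in Y_i$ for $i=1,\dots,R$. Let $(\alpha^\dagger,\beta^\dagger)$ be a maximizer of the dual entropic OT functional $J_\varepsilon$. Define $d\in\mathbb R^{R\times R}$ by $$d(i,j)=-\varepsilon\log\Big(\sum_{x\in X_i,\,y\in Y_j}\exp\Big(-\tfrac1\varepsilon\big[c(x,y)-\alpha^\dagger(x)-\beta^\dagger(y_i)-\beta^\dagger(y)+\beta^\dagger(y_j)\big]\Big)\mu(x)\nu(y)\Big),$$ and $\hat J:\mathbb R^R\to\mathbb R$, $\hat J(\hat\beta)=-\varepsilon\sum_{i,j=1}^R\exp\big(-\tfrac1\varepsilon[d(i,j)+\hat\beta(i)-\hat\beta(j)]\big)$. Then $\hat\beta^\dagger\in\mathbb R^R$, $\hat\beta^\dagger(i)=\beta^\dagger(y_i)$, is a maximizer of $\hat J$, and conversely every maximizer $\hat\beta^{\dagger\dagger}$ of $\hat J$ satisfies $\hat\beta^{\dagger\dagger}=\hat\beta^\dagger+b$ for some constant $b\in\mathbb R$.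
   Context: $J_\varepsilon(\alpha,\beta)=\langle\alpha,\mu\rangle+\langle\beta,\nu\rangle-\varepsilon\sum_{x,y}K(x,y)\big(\exp((\alpha(x)+\beta(y))/\varepsilon)-1\big)$ with $K(x,y)=\exp(-c(x,y)/\varepsilon)\mu(x)\nu(y)$. $\mu(A)=\sum_{x\in A}\mu(x)$. *)

theory Defs
  imports Complex_Main
begin

definition prob_vec :: "'a set \<Rightarrow> ('a \<Rightarrow> real) \<Rightarrow> bool" where
  "prob_vec A m \<longleftrightarrow> finite A \<and> (\<forall>x\<in>A. m x > 0) \<and> (\<Sum>x\<in>A. m x) = 1"

definition mass :: "('a \<Rightarrow> real) \<Rightarrow> 'a set \<Rightarrow> real" where
  "mass m A = (\<Sum>x\<in>A. m x)"

definition Kker :: "real \<Rightarrow> ('a \<Rightarrow> 'b \<Rightarrow> real) \<Rightarrow> ('a \<Rightarrow> real) \<Rightarrow> ('b \<Rightarrow> real) \<Rightarrow> 'a \<Rightarrow> 'b \<Rightarrow> real" where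
  "Kker eps c mu nu x y = exp (- c x y / eps) * mu x * nu y"

definition J_eps :: "real \<Rightarrow> 'a set \<Rightarrow> 'b set \<Rightarrow> ('a \<Rightarrow> 'b \<Rightarrow> real) \<Rightarrow> ('a \<Rightarrow> real) \<Rightarrow> ('b \<Rightarrow> real)
    \<Rightarrow> ('a \<Rightarrow> real) \<Rightarrow> ('b \<Rightarrow> real) \<Rightarrow> real" where
  "J_eps eps X Y c mu nu \<alpha> \<beta> =
     (\<Sum>x\<in>X. \<alpha> x * mu x) + (\<Sum>y\<in>Y. \<beta> y * nu y)
     - eps * (\<Sum>x\<in>X. \<Sum>y\<in>Y. Kker eps c mu nu x y * (exp ((\<alpha> x + \<beta> y) / eps) - 1))"

definition is_partition :: "'a set \<Rightarrow> nat \<Rightarrow> (nat \<Rightarrow> 'a set) \<Rightarrow> bool" where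
  "is_partition A R P \<longleftrightarrow>
     (\<forall>i\<in>{1..R}. P i \<noteq> {} \<and> P i \<subseteq> A) \<and>
     (\<forall>i\<in>{1..R}. \<forall>j\<in>{1..R}. i \<noteq> j \<longrightarrow> P i \<inter> P j = {}) \<and>
     (\<Union>i\<in>{1..R}. P i) = A"

definition coarse_d :: "real \<Rightarrow> ('a \<Rightarrow> 'b \<Rightarrow> real) \<Rightarrow> ('a \<Rightarrow> real) \<Rightarrow> ('b \<Rightarrow> real)
    \<Rightarrow> (nat \<Rightarrow> 'a set) \<Rightarrow> (nat \<Rightarrow> 'b set) \<Rightarrow> (nat \<Rightarrow> 'b)
    \<Rightarrow> ('a \<Rightarrow> real) \<Rightarrow> ('b \<Rightarrow> real) \<Rightarrow> nat \<Rightarrow> nat \<Rightarrow> real" where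
  "coarse_d eps c mu nu Xp Yp yr \<alpha> \<beta> i j =
     - eps * ln (\<Sum>x\<in>Xp i. \<Sum>y\<in>Yp j.
        exp (- (1/eps) * (c x y - \<alpha> x - \<beta> (yr i) - \<beta> y + \<beta> (yr j))) * mu x * nu y)"

definition J_hat :: "real \<Rightarrow> nat \<Rightarrow> (nat \<Rightarrow> nat \<Rightarrow> real) \<Rightarrow> (nat \<Rightarrow> real) \<Rightarrow> real" where
  "J_hat eps R d b = - eps * (\<Sum>i\<in>{1..R}. \<Sum>j\<in>{1..R}. exp (- (1/eps) * (d i j + b i - b j)))"

end

theory Submission imports Defs begin
lemma exp_eq_strict: fixes t::real assumes "exp t \<le> 1 + t" shows "t = 0"
proof (rule ccontr)
  assume "t \<noteq> 0"
  show False
  proof (cases "1 + t/2 \<ge> 0")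
    case True
    have "(1 + t/2)^2 \<le> exp (t/2) ^ 2"
      using True exp_ge_add_one_self[of "t/2"] by (intro power_mono) auto
    also have "exp (t/2)^2 = exp t" by (simp add: power2_eq_square flip: exp_add)
    finally have "1 + t + t^2/4 \<le> exp t" by (simp add: power2_eq_square field_simps)
    moreover have "t^2 > 0" using \<open>t\<noteq>0\<close> by simp
    ultimately show False using assms by linarith
  next
    case False
    then have "1 + t < 0" by linarith
    then show False using assms exp_gt_zero[of t] by linarith
  qed
qed

lemma foc_scalar:
  fixes m A eps :: real
  assumes "m > 0" "A > 0" "eps > 0" "\<forall>s. s*m - eps*(A*(exp(s/eps)-1)) \<le> 0"
  shows "A = m"
proof -
  define t where "t = ln (A/m)"
  have At: "A = m * exp t" using assms by (simp add: t_def)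
  have "(-eps*t)*m - eps*(A*(exp((-eps*t)/eps)-1)) \<le> 0" using assms(4) by blast
  moreover have "A*(exp((-eps*t)/eps)-1) = m - A" using At assms(3) by (simp add: exp_minus field_simps)
  ultimately have "-eps*t*m - eps*(m - A) \<le> 0" by simp
  hence "eps * (A - m - t*m) \<le> 0" by (simp add: algebra_simps)
  hence "A - m - t*m \<le> 0" using assms(3) by (simp add: mult_le_0_iff)
  hence "m * exp t \<le> m * (1 + t)" using At by (simp add: algebra_simps)
  hence "exp t \<le> 1 + t" using assms(1) by simp
  hence "t = 0" by (rule exp_eq_strict)
  thus ?thesis using At by simp
qed

lemma coarse_ge:
  fixes P :: "nat \<Rightarrow> nat \<Rightarrow> real"
  assumes "finite I" "\<forall>i\<in>I. \<forall>j\<in>I. P i j \<ge> 0" "\<forall>i\<in>I. (\<Sum>j\<in>I. P i j) = (\<Sum>j\<in>I. P j i)"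
  shows "(\<Sum>i\<in>I. \<Sum>j\<in>I. P i j * (1 + (w j - w i))) = (\<Sum>i\<in>I. \<Sum>j\<in>I. P i j)"
    and "(\<Sum>i\<in>I. \<Sum>j\<in>I. P i j) \<le> (\<Sum>i\<in>I. \<Sum>j\<in>I. P i j * exp (w j - w i))"
proof -
  have A: "(\<Sum>i\<in>I. \<Sum>j\<in>I. P i j * w j) = (\<Sum>i\<in>I. \<Sum>j\<in>I. P i j * w i)"
  proof -
    have "(\<Sum>i\<in>I. \<Sum>j\<in>I. P i j * w j) = (\<Sum>j\<in>I. w j * (\<Sum>i\<in>I. P i j))"
      by (subst sum.swap) (simp add: sum_distrib_left mult.commute)
    also have "\<dots> = (\<Sum>j\<in>I. w j * (\<Sum>i\<in>I. P j i))" using assms(3) by simp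
    also have "\<dots> = (\<Sum>i\<in>I. \<Sum>j\<in>I. P i j * w i)"
      by (simp add: sum_distrib_left mult.commute)
    finally show ?thesis .
  qed
  show E: "(\<Sum>i\<in>I. \<Sum>j\<in>I. P i j * (1 + (w j - w i))) = (\<Sum>i\<in>I. \<Sum>j\<in>I. P i j)"
    using A by (simp add: algebra_simps sum.distrib sum_subtractf)
  have "(\<Sum>i\<in>I. \<Sum>j\<in>I. P i j * (1 + (w j - w i))) \<le> (\<Sum>i\<in>I. \<Sum>j\<in>I. P i j * exp (w j - w i))"
    using assms(2) by (intro sum_mono mult_left_mono) auto
  thus "(\<Sum>i\<in>I. \<Sum>j\<in>I. P i j) \<le> (\<Sum>i\<in>I. \<Sum>j\<in>I. P i j * exp (w j - w i))" using E by simp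
qed

lemma coarse_eq:
  fixes P :: "nat \<Rightarrow> nat \<Rightarrow> real"
  assumes "finite I" "\<forall>i\<in>I. \<forall>j\<in>I. P i j > 0" "\<forall>i\<in>I. (\<Sum>j\<in>I. P i j) = (\<Sum>j\<in>I. P j i)"
    and le: "(\<Sum>i\<in>I. \<Sum>j\<in>I. P i j * exp (w j - w i)) \<le> (\<Sum>i\<in>I. \<Sum>j\<in>I. P i j)"
    and ij: "i \<in> I" "j \<in> I"
  shows "w j = w i"
proof -
  have nn: "\<forall>i\<in>I. \<forall>j\<in>I. P i j \<ge> 0" using assms(2) by (simp add: order_less_imp_le)
  note E = coarse_ge(1)[OF assms(1) nn assms(3), of w]
  define f where "f i j = P i j * (exp (w j - w i) - (1 + (w j - w i)))" for i j
  have f0: "\<forall>i\<in>I. \<forall>j\<in>I. f i j \<ge> 0" using nn unfolding f_def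
    by (auto intro!: mult_nonneg_nonneg)
  have "(\<Sum>i\<in>I. \<Sum>j\<in>I. f i j) = (\<Sum>i\<in>I. \<Sum>j\<in>I. P i j * exp (w j - w i)) - (\<Sum>i\<in>I. \<Sum>j\<in>I. P i j * (1 + (w j - w i)))"
    unfolding f_def by (simp add: algebra_simps sum_subtractf sum.distrib)
  also have "\<dots> \<le> 0" using le E by simp
  finally have s0: "(\<Sum>i\<in>I. \<Sum>j\<in>I. f i j) \<le> 0" .
  have "(\<Sum>i\<in>I. \<Sum>j\<in>I. f i j) \<ge> 0" using f0 by (intro sum_nonneg) auto
  hence "(\<Sum>i\<in>I. \<Sum>j\<in>I. f i j) = 0" using s0 by linarith
  hence "\<forall>i\<in>I. (\<Sum>j\<in>I. f i j) = 0"
    using f0 assms(1) by (subst (asm) sum_nonneg_eq_0_iff) (auto intro: sum_nonneg)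
  hence "\<forall>i\<in>I. \<forall>j\<in>I. f i j = 0"
    using f0 assms(1) by (auto simp: sum_nonneg_eq_0_iff)
  hence "f i j = 0" using ij by auto
  hence "exp (w j - w i) = 1 + (w j - w i)" using assms(2) ij unfolding f_def by fastforce
  hence "w j - w i = 0" by (intro exp_eq_strict) simp
  thus ?thesis by simp
qed

lemma sum_diff_one:
  fixes g h :: "'a \<Rightarrow> real"
  assumes "finite X" "x0 \<in> X" "\<forall>x\<in>X. x \<noteq> x0 \<longrightarrow> g x = h x"
  shows "sum g X = sum h X + (g x0 - h x0)"
proof -
  have "sum g X = g x0 + sum g (X - {x0})" using assms by (simp add: sum.remove)
  moreover have "sum h X = h x0 + sum h (X - {x0})" using assms by (simp add: sum.remove)
  moreover have "sum g (X - {x0}) = sum h (X - {x0})" using assms(3) by (intro sum.cong) auto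
  ultimately show ?thesis by simp
qed

lemma J_shift_alpha:
  assumes "finite X" "x0 \<in> X"
  shows "J_eps eps X Y c mu nu (\<alpha>(x0 := \<alpha> x0 + s)) \<beta> = J_eps eps X Y c mu nu \<alpha> \<beta>
     + (s * mu x0 - eps * ((\<Sum>y\<in>Y. Kker eps c mu nu x0 y * exp((\<alpha> x0 + \<beta> y)/eps)) * (exp(s/eps) - 1)))"
proof -
  let ?a = "\<alpha>(x0 := \<alpha> x0 + s)"
  have 1: "(\<Sum>x\<in>X. ?a x * mu x) = (\<Sum>x\<in>X. \<alpha> x * mu x) + (?a x0 * mu x0 - \<alpha> x0 * mu x0)"
    by (rule sum_diff_one[OF assms]) auto
  have 2: "(\<Sum>x\<in>X. \<Sum>y\<in>Y. Kker eps c mu nu x y * (exp ((?a x + \<beta> y) / eps) - 1))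
     = (\<Sum>x\<in>X. \<Sum>y\<in>Y. Kker eps c mu nu x y * (exp ((\<alpha> x + \<beta> y) / eps) - 1))
       + ((\<Sum>y\<in>Y. Kker eps c mu nu x0 y * (exp ((?a x0 + \<beta> y) / eps) - 1))
          - (\<Sum>y\<in>Y. Kker eps c mu nu x0 y * (exp ((\<alpha> x0 + \<beta> y) / eps) - 1)))"
    by (rule sum_diff_one[OF assms]) auto
  have 3: "(\<Sum>y\<in>Y. Kker eps c mu nu x0 y * (exp ((?a x0 + \<beta> y) / eps) - 1))
          - (\<Sum>y\<in>Y. Kker eps c mu nu x0 y * (exp ((\<alpha> x0 + \<beta> y) / eps) - 1))
        = (\<Sum>y\<in>Y. Kker eps c mu nu x0 y * exp((\<alpha> x0 + \<beta> y)/eps)) * (exp(s/eps) - 1)"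
  proof -
    have E: "\<And>y. exp ((\<alpha> x0 + s + \<beta> y) / eps) = exp (s/eps) * exp ((\<alpha> x0 + \<beta> y) / eps)"
      by (simp add: add_divide_distrib algebra_simps flip: exp_add)
    show ?thesis
      apply (simp only: fun_upd_same E sum_subtractf[symmetric] sum_distrib_right)
      apply (rule sum.cong) apply (auto simp: algebra_simps)
      done
  qed
  show ?thesis unfolding J_eps_def 1 2 3 by (simp add: algebra_simps)
qed

lemma J_shift_beta:
  assumes "finite Y" "y0 \<in> Y"
  shows "J_eps eps X Y c mu nu \<alpha> (\<beta>(y0 := \<beta> y0 + s)) = J_eps eps X Y c mu nu \<alpha> \<beta>
     + (s * nu y0 - eps * ((\<Sum>x\<in>X. Kker eps c mu nu x y0 * exp((\<alpha> x + \<beta> y0)/eps)) * (exp(s/eps) - 1)))"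
proof -
  let ?b = "\<beta>(y0 := \<beta> y0 + s)"
  have 1: "(\<Sum>y\<in>Y. ?b y * nu y) = (\<Sum>y\<in>Y. \<beta> y * nu y) + (?b y0 * nu y0 - \<beta> y0 * nu y0)"
    by (rule sum_diff_one[OF assms]) auto
  have 2: "\<And>x. (\<Sum>y\<in>Y. Kker eps c mu nu x y * (exp ((\<alpha> x + ?b y) / eps) - 1))
     = (\<Sum>y\<in>Y. Kker eps c mu nu x y * (exp ((\<alpha> x + \<beta> y) / eps) - 1))
       + (Kker eps c mu nu x y0 * (exp ((\<alpha> x + ?b y0) / eps) - 1)
          - Kker eps c mu nu x y0 * (exp ((\<alpha> x + \<beta> y0) / eps) - 1))"
    by (rule sum_diff_one[OF assms]) auto
  have 3: "\<And>x. exp ((\<alpha> x + (\<beta> y0 + s)) / eps) = exp (s/eps) * exp ((\<alpha> x + \<beta> y0) / eps)"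
      by (simp add: add_divide_distrib algebra_simps flip: exp_add)
  have 4: "(\<Sum>x\<in>X. Kker eps c mu nu x y0 * (exp ((\<alpha> x + ?b y0) / eps) - 1)
          - Kker eps c mu nu x y0 * (exp ((\<alpha> x + \<beta> y0) / eps) - 1))
      = (\<Sum>x\<in>X. Kker eps c mu nu x y0 * exp((\<alpha> x + \<beta> y0)/eps)) * (exp(s/eps) - 1)"
      apply (simp only: fun_upd_same 3 sum_distrib_right)
      apply (rule sum.cong) apply (auto simp: algebra_simps)
      done
  show ?thesis unfolding J_eps_def 1 2 sum.distrib 4
    by (simp add: algebra_simps)
qed

theorem mainTheorem8:
  fixes X :: "'a set" and Y :: "'b set"
    and mu :: "'a \<Rightarrow> real" and nu :: "'b \<Rightarrow> real"
    and c :: "'a \<Rightarrow> 'b \<Rightarrow> real" and eps :: real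
    and R :: nat and Xp :: "nat \<Rightarrow> 'a set" and Yp :: "nat \<Rightarrow> 'b set" and yr :: "nat \<Rightarrow> 'b"
    and \<alpha>d :: "'a \<Rightarrow> real" and \<beta>d :: "'b \<Rightarrow> real"
  assumes "finite X" "finite Y"
    and "prob_vec X mu" "prob_vec Y nu"
    and "\<forall>x\<in>X. \<forall>y\<in>Y. c x y \<ge> 0"
    and "eps > 0"
    and "is_partition X R Xp" "is_partition Y R Yp"
    and "\<forall>i\<in>{1..R}. mass mu (Xp i) = mass nu (Yp i)"
    and "\<forall>i\<in>{1..R}. yr i \<in> Yp i"
    and "\<forall>\<alpha> \<beta>. J_eps eps X Y c mu nu \<alpha> \<beta> \<le> J_eps eps X Y c mu nu \<alpha>d \<beta>d"
  shows "(\<forall>b. J_hat eps R (coarse_d eps c mu nu Xp Yp yr \<alpha>d \<beta>d) b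
              \<le> J_hat eps R (coarse_d eps c mu nu Xp Yp yr \<alpha>d \<beta>d) (\<lambda>i. \<beta>d (yr i)))
       \<and> (\<forall>b2. (\<forall>b. J_hat eps R (coarse_d eps c mu nu Xp Yp yr \<alpha>d \<beta>d) b
                    \<le> J_hat eps R (coarse_d eps c mu nu Xp Yp yr \<alpha>d \<beta>d) b2)
              \<longrightarrow> (\<exists>t::real. \<forall>i\<in>{1..R}. b2 i = \<beta>d (yr i) + t))"
proof -
  note fX = assms(1) and fY = assms(2) and eps = assms(6) and max = assms(11)
  have muP: "\<forall>x\<in>X. mu x > 0" and muS: "(\<Sum>x\<in>X. mu x) = 1"
    using assms(3) unfolding prob_vec_def by auto
  have nuP: "\<forall>y\<in>Y. nu y > 0" and nuS: "(\<Sum>y\<in>Y. nu y) = 1"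
    using assms(4) unfolding prob_vec_def by auto
  have Xne: "X \<noteq> {}" using muS by auto
  have Yne: "Y \<noteq> {}" using nuS by auto
  define \<pi> where "\<pi> x y = exp ((\<alpha>d x + \<beta>d y - c x y)/eps) * mu x * nu y" for x y
  have K\<pi>: "Kker eps c mu nu x y * exp((\<alpha>d x + \<beta>d y)/eps) = \<pi> x y" for x y
  proof -
    have "exp (- c x y / eps) * exp((\<alpha>d x + \<beta>d y)/eps) = exp ((\<alpha>d x + \<beta>d y - c x y)/eps)"
      by (simp add: diff_divide_distrib flip: exp_add)
    thus ?thesis unfolding Kker_def \<pi>_def by (simp add: algebra_simps)
  qed
  have \<pi>pos: "\<pi> x y > 0" if "x \<in> X" "y \<in> Y" for x y
    using muP nuP that unfolding \<pi>_def by simp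
  have focX: "(\<Sum>y\<in>Y. \<pi> x y) = mu x" if x: "x \<in> X" for x
  proof -
    let ?A = "\<Sum>y\<in>Y. Kker eps c mu nu x y * exp((\<alpha>d x + \<beta>d y)/eps)"
    have "?A = (\<Sum>y\<in>Y. \<pi> x y)" using K\<pi> by simp
    moreover have "(\<Sum>y\<in>Y. \<pi> x y) > 0" using \<pi>pos x fY Yne by (intro sum_pos) auto
    moreover have "\<forall>s. s * mu x - eps * (?A * (exp (s/eps) - 1)) \<le> 0"
    proof
      fix s
      show "s * mu x - eps * (?A * (exp (s/eps) - 1)) \<le> 0"
        using max[rule_format, of "\<alpha>d(x := \<alpha>d x + s)" \<beta>d] J_shift_alpha[OF fX x, where eps=eps and Y=Y and c=c and mu=mu and nu=nu and \<alpha>=\<alpha>d and s=s and \<beta>=\<beta>d]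
        by linarith
    qed
    ultimately show ?thesis using foc_scalar[of "mu x" ?A eps] muP x eps by auto
  qed
  have focY: "(\<Sum>x\<in>X. \<pi> x y) = nu y" if y: "y \<in> Y" for y
  proof -
    let ?A = "\<Sum>x\<in>X. Kker eps c mu nu x y * exp((\<alpha>d x + \<beta>d y)/eps)"
    have "?A = (\<Sum>x\<in>X. \<pi> x y)" using K\<pi> by simp
    moreover have "(\<Sum>x\<in>X. \<pi> x y) > 0" using \<pi>pos y fX Xne by (intro sum_pos) auto
    moreover have "\<forall>s. s * nu y - eps * (?A * (exp (s/eps) - 1)) \<le> 0"
    proof
      fix s
      show "s * nu y - eps * (?A * (exp (s/eps) - 1)) \<le> 0"
        using max[rule_format, of \<alpha>d "\<beta>d(y := \<beta>d y + s)"] J_shift_beta[OF fY y, where eps=eps and X=X and c=c and mu=mu and nu=nu and \<alpha>=\<alpha>d and s=s and \<beta>=\<beta>d]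
        by linarith
    qed
    ultimately show ?thesis using foc_scalar[of "nu y" ?A eps] nuP y eps by auto
  qed
  define I where "I = {1..R}"
  have fI: "finite I" unfolding I_def by simp
  have PX: "\<forall>i\<in>I. Xp i \<noteq> {} \<and> Xp i \<subseteq> X" "\<forall>i\<in>I. \<forall>j\<in>I. i \<noteq> j \<longrightarrow> Xp i \<inter> Xp j = {}"
     "(\<Union>i\<in>I. Xp i) = X"
    using assms(7) unfolding is_partition_def I_def by auto
  have PY: "\<forall>i\<in>I. Yp i \<noteq> {} \<and> Yp i \<subseteq> Y" "\<forall>i\<in>I. \<forall>j\<in>I. i \<noteq> j \<longrightarrow> Yp i \<inter> Yp j = {}"
     "(\<Union>i\<in>I. Yp i) = Y"
    using assms(8) unfolding is_partition_def I_def by auto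
  have fXp: "\<forall>i\<in>I. finite (Xp i)" using PX(1) fX finite_subset by blast
  have fYp: "\<forall>i\<in>I. finite (Yp i)" using PY(1) fY finite_subset by blast
  define P where "P i j = (\<Sum>x\<in>Xp i. \<Sum>y\<in>Yp j. \<pi> x y)" for i j
  have Ppos: "\<forall>i\<in>I. \<forall>j\<in>I. P i j > 0"
  proof (intro ballI)
    fix i j assume i: "i \<in> I" and j: "j \<in> I"
    show "P i j > 0" unfolding P_def
      using PX(1) PY(1) fXp fYp i j \<pi>pos
      by (intro sum_pos) (auto intro!: sum_pos, blast)
  qed
  have row: "(\<Sum>j\<in>I. P i j) = mass mu (Xp i)" if i: "i \<in> I" for i
  proof -
    have "(\<Sum>j\<in>I. P i j) = (\<Sum>x\<in>Xp i. \<Sum>j\<in>I. \<Sum>y\<in>Yp j. \<pi> x y)"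
      unfolding P_def by (rule sum.swap)
    also have "\<dots> = (\<Sum>x\<in>Xp i. \<Sum>y\<in>Y. \<pi> x y)"
      proof -
        have U: "\<And>g. sum g Y = (\<Sum>x\<in>I. sum g (Yp x))" using sum.UNION_disjoint[OF fI fYp PY(2)] PY(3) by simp
        show ?thesis by (intro sum.cong refl) (rule U[symmetric])
      qed
    also have "\<dots> = (\<Sum>x\<in>Xp i. mu x)" using focX PX(1) i by (intro sum.cong) auto
    finally show ?thesis unfolding mass_def .
  qed
  have col: "(\<Sum>j\<in>I. P j i) = mass nu (Yp i)" if i: "i \<in> I" for i
  proof -
    have "(\<Sum>j\<in>I. P j i) = (\<Sum>x\<in>X. \<Sum>y\<in>Yp i. \<pi> x y)"
    proof -
      have U: "\<And>g. sum g X = (\<Sum>x\<in>I. sum g (Xp x))" using sum.UNION_disjoint[OF fI fXp PX(2)] PX(3) by simp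
      show ?thesis unfolding P_def by (rule U[symmetric])
    qed
    also have "\<dots> = (\<Sum>y\<in>Yp i. \<Sum>x\<in>X. \<pi> x y)" by (rule sum.swap)
    also have "\<dots> = (\<Sum>y\<in>Yp i. nu y)" using focY PY(1) i by (intro sum.cong) auto
    finally show ?thesis unfolding mass_def .
  qed
  have rc: "\<forall>i\<in>I. (\<Sum>j\<in>I. P i j) = (\<Sum>j\<in>I. P j i)"
    using row col assms(9) unfolding I_def by auto
  define d where "d = coarse_d eps c mu nu Xp Yp yr \<alpha>d \<beta>d"
  define w where "w b i = (b i - \<beta>d (yr i)) / eps" for b :: "nat \<Rightarrow> real" and i
  have trm: "exp (- (1/eps) * (d i j + b i - b j)) = P i j * exp (w b j - w b i)"
    if i: "i \<in> I" and j: "j \<in> I" for i j b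
  proof -
    define S where "S = (\<Sum>x\<in>Xp i. \<Sum>y\<in>Yp j.
        exp (- (1/eps) * (c x y - \<alpha>d x - \<beta>d (yr i) - \<beta>d y + \<beta>d (yr j))) * mu x * nu y)"
    have S: "S = exp ((\<beta>d (yr i) - \<beta>d (yr j))/eps) * P i j"
    proof -
      have "exp (- (1/eps) * (c x y - \<alpha>d x - \<beta>d (yr i) - \<beta>d y + \<beta>d (yr j))) * mu x * nu y
          = exp ((\<beta>d (yr i) - \<beta>d (yr j))/eps) * \<pi> x y" for x y
      proof -
        have "- (1/eps) * (c x y - \<alpha>d x - \<beta>d (yr i) - \<beta>d y + \<beta>d (yr j))
            = (\<beta>d (yr i) - \<beta>d (yr j))/eps + (\<alpha>d x + \<beta>d y - c x y)/eps"
          using eps by (simp add: field_simps)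
        thus ?thesis unfolding \<pi>_def by (simp add: exp_add)
      qed
      thus ?thesis unfolding S_def P_def by (simp add: sum_distrib_left)
    qed
    have Sp: "S > 0" using S Ppos i j by simp
    have dS: "d i j = - eps * ln S" unfolding d_def coarse_d_def S_def by simp
    have "- (1/eps) * (d i j + b i - b j) = ln S + (b j - b i)/eps"
      using eps unfolding dS by (simp add: field_simps)
    hence "exp (- (1/eps) * (d i j + b i - b j)) = S * exp ((b j - b i)/eps)"
      using Sp by (simp add: exp_add)
    also have "\<dots> = P i j * (exp ((\<beta>d (yr i) - \<beta>d (yr j))/eps) * exp ((b j - b i)/eps))"
      unfolding S by simp
    also have "exp ((\<beta>d (yr i) - \<beta>d (yr j))/eps) * exp ((b j - b i)/eps) = exp (w b j - w b i)"
      unfolding w_def by (simp add: diff_divide_distrib add_divide_distrib algebra_simps flip: exp_add)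
    finally show ?thesis .
  qed
  have Jh: "J_hat eps R d b = - eps * (\<Sum>i\<in>I. \<Sum>j\<in>I. P i j * exp (w b j - w b i))" for b
  proof -
    have "(\<Sum>i\<in>I. \<Sum>j\<in>I. exp (- (1/eps) * (d i j + b i - b j))) = (\<Sum>i\<in>I. \<Sum>j\<in>I. P i j * exp (w b j - w b i))"
      by (intro sum.cong refl trm)
    thus ?thesis unfolding J_hat_def I_def by simp
  qed
  have w0: "w (\<lambda>i. \<beta>d (yr i)) i = 0" for i unfolding w_def by simp
  have Jh0: "J_hat eps R d (\<lambda>i. \<beta>d (yr i)) = - eps * (\<Sum>i\<in>I. \<Sum>j\<in>I. P i j)"
    unfolding Jh w0 by simp
  have nnP: "\<forall>i\<in>I. \<forall>j\<in>I. P i j \<ge> 0" using Ppos by (simp add: order_less_imp_le)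
  have part1: "\<forall>b. J_hat eps R d b \<le> J_hat eps R d (\<lambda>i. \<beta>d (yr i))"
  proof
    fix b
    show "J_hat eps R d b \<le> J_hat eps R d (\<lambda>i. \<beta>d (yr i))"
      unfolding Jh[of b] Jh0 using coarse_ge(2)[OF fI nnP rc, of "w b"] eps by simp
  qed
  have part2: "\<exists>t::real. \<forall>i\<in>{1..R}. b2 i = \<beta>d (yr i) + t"
    if mx: "\<forall>b. J_hat eps R d b \<le> J_hat eps R d b2" for b2
  proof (cases "R = 0")
    case True thus ?thesis by auto
  next
    case False
    have 1: "1 \<in> I" using False unfolding I_def by auto
    have "J_hat eps R d (\<lambda>i. \<beta>d (yr i)) \<le> J_hat eps R d b2" using mx by blast
    hence le: "(\<Sum>i\<in>I. \<Sum>j\<in>I. P i j * exp (w b2 j - w b2 i)) \<le> (\<Sum>i\<in>I. \<Sum>j\<in>I. P i j)"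
      unfolding Jh[of b2] Jh0 using eps by simp
    show ?thesis
    proof (intro exI ballI)
      fix i assume "i \<in> {1..R}"
      hence i: "i \<in> I" unfolding I_def .
      have "w b2 i = w b2 1" using coarse_eq[OF fI Ppos rc le 1 i] .
      thus "b2 i = \<beta>d (yr i) + (b2 1 - \<beta>d (yr 1))" unfolding w_def using eps by (simp add: field_simps)
    qed
  qed
  show ?thesis using part1 part2 unfolding d_def by blast
qed

end
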